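(* Let $\{x_k\}$, $\{d_k\}$ be generated by Algorithm 1 or Algorithm 2 (described in the context) under the Standing Assumption and Matrix Assumption of the context, and suppose the algorithm does not terminate finitely. Write $d_k=u_k+v_k$ with $u_k\in\mathrm{Null}(J_k)$, $v_k\in\mathrm{Range}(J_k^T)$. Then the sequence $\{u_k\}$ is bounded.
   Context: Notation: $g_k=\nabla f(x_k)$, $c_k=c(x_k)$, $J_k=\nabla c(x_k)^T$; $\phi(x,\tau)=\tau f(x)+\|c(x)\|_1$; $\Delta q(x,\tau,g,H,d)=-\tau(g^Td+\frac12\max\{d^THd,0\})+\|c(x)\|_1$. Matrix Assumption: symmetric $H_k$ with $\|H_k\|_2\le\kappa_H$ and $u^TH_ku\ge\zeta\|u\|_2^2$ whenever $J_ku=0$. Common iteration: $(d_k,y_k)$ solves $H_kd_k+J_k^Ty_k=-g_k$, $J_kd_k=-c_k$; stop if $g_k+J_k^Ty_k=0$ and $c_k=0$. $\tau_k^{trial}=\infty$ if $g_k^Td_k+\max\{d_k^TH_kd_k,0\}\le0$, else $\frac{(1-\sigma)\|c_k\|_1}{g_k^Td_k+\max\{d_k^TH_kd_k,0\}}$; $\tau_k=\tau_{k-1}$ if $\tau_{k-1}\le\tau_k^{trial}$, else $(1-\epsilon)\tau_k^{trial}$; $x_{k+1}=x_k+\alpha_kd_k$. (SD) for trial $\alpha$: $\phi(x_k+\alpha d_k,\tau_k)\le\phi(x_k,\tau_k)-\eta\alpha\Delta q(x_k,\tau_k,g_k,H_k,d_k)$. Algorithm 1 (inputs $\tau_{-1}>0$,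 $\epsilon,\sigma,\eta\in(0,1)$, $\rho>1$, $L_{-1}>0$, $\gamma_{-1,i}>0$): choose $L_{k,0}\in(0,L_{k-1}]$, $\gamma_{k,i,0}\in(0,\gamma_{k-1,i}]$; for $j=0,1,\dots$ with $\Lambda_{k,j}=\tau_kL_{k,j}+\sum_i\gamma_{k,i,j}$: $\widehat\alpha_{k,j}=\frac{2(1-\eta)\Delta q(x_k,\tau_k,g_k,H_k,d_k)}{\Lambda_{k,j}\|d_k\|_2^2}$, $\widetilde\alpha_{k,j}=\widehat\alpha_{k,j}-\frac{4\|c_k\|_1}{\Lambda_{k,j}\|d_k\|_2^2}$; $\alpha_{k,j}=\widehat\alpha_{k,j}$ if $\widehat\alpha_{k,j}<1$, $1$ if $\widetilde\alpha_{k,j}\le1\le\widehat\alpha_{k,j}$, $\widetilde\alpha_{k,j}$ if $\widetilde\alpha_{k,j}>1$; accept ($\alpha_k=\alpha_{k,j}$, $L_k=L_{k,j}$, $\gamma_{k,i}=\gamma_{k,i,j}$) if (SD) holds or if both $f(x_k+\alpha_{k,j}d_k)\le f(x_k)+\alpha_{k,j}g_k^Td_k+\frac12L_{k,j}\alpha_{k,j}^2\|d_k\|_2^2$ (LF) and $|c_i(x_k+\alpha_{k,j}d_k)|\le|c_i(x_k)+\alpha_{k,j}\nabla c_i(x_k)^Td_k|+\frac12\gamma_{k,i,j}\alpha_{k,j}^2\|d_k\|_2^2$ (LC$_i$) for all $i$; otherwise multiply $L_{k,j}$ by $\rho$ if (LF) fails and $\gamma_{k,i,j}$ by $\rho$ if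 (LC$_i$) fails. Algorithm 2 (inputs $\tau_{-1}>0$, $\epsilon,\sigma,\eta,\nu\in(0,1)$, $\alpha>0$): $\alpha_k=\nu^j\alpha$ for the smallest $j\ge0$ such that (SD) holds. Standing Assumption: an open convex set $\mathcal X$ contains all iterates and trial points $x_k+\alpha_{k,j}d_k$; $f$ is $C^1$, bounded below on $\mathcal X$, $\nabla f$ bounded and $L$-Lipschitz on $\mathcal X$; $c$, $\nabla c^T$ bounded on $\mathcal X$; $\nabla c_i$ is $\gamma_i$-Lipschitz on $\mathcal X$; singular values of $\nabla c(x)^T$ bounded away from zero uniformly over $\mathcal X$. *)

theory Defs
  imports "HOL-Analysis.Analysis"
begin

text \<open>Vectors in R^n are real^'n, constraint values in R^m are real^'m,
  the constraint Jacobian J(x) = (grad c(x))^T is an m x n matrix real^'n^'m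
  whose i-th row (Jc x $ i) is grad c_i(x).\<close>

definition l1norm :: "real^'m \<Rightarrow> real" where
  "l1norm v = (\<Sum>i\<in>UNIV. \<bar>v $ i\<bar>)"

definition merit :: "(real^'n \<Rightarrow> real) \<Rightarrow> (real^'n \<Rightarrow> real^'m) \<Rightarrow> real^'n \<Rightarrow> real \<Rightarrow> real" where
  "merit f c x tau = tau * f x + l1norm (c x)"

definition dq :: "(real^'n \<Rightarrow> real^'m) \<Rightarrow> real^'n \<Rightarrow> real \<Rightarrow> real^'n \<Rightarrow> real^'n^'n \<Rightarrow> real^'n \<Rightarrow> real" where
  "dq c x tau g H d = - tau * (g \<bullet> d + (1/2) * max (d \<bullet> (H *v d)) 0) + l1norm (c x)"

definition SD :: "(real^'n \<Rightarrow> real) \<Rightarrow> (real^'n \<Rightarrow> real^'m) \<Rightarrow> real \<Rightarrow> real^'n \<Rightarrow> real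
    \<Rightarrow> real^'n \<Rightarrow> real^'n^'n \<Rightarrow> real^'n \<Rightarrow> real \<Rightarrow> bool" where
  "SD f c eta x tau g H d a \<longleftrightarrow>
     merit f c (x + a *\<^sub>R d) tau \<le> merit f c x tau - eta * a * dq c x tau g H d"

definition singular_values :: "real^'m^'n \<Rightarrow> real set" where
  "singular_values A = {sqrt l | l. \<exists>v. v \<noteq> 0 \<and> (transpose A ** A) *v v = l *\<^sub>R v}"

definition tau_trial :: "real \<Rightarrow> real^'n \<Rightarrow> real^'m \<Rightarrow> real^'n^'n \<Rightarrow> real^'n \<Rightarrow> ereal" where
  "tau_trial sig g cx H d =
     (if g \<bullet> d + max (d \<bullet> (H *v d)) 0 \<le> 0 then \<infinity>
      else ereal ((1 - sig) * l1norm cx / (g \<bullet> d + max (d \<bullet> (H *v d)) 0)))"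

definition tau_update :: "real \<Rightarrow> real \<Rightarrow> ereal \<Rightarrow> real" where
  "tau_update eps tau_prev trial =
     (if ereal tau_prev \<le> trial then tau_prev else (1 - eps) * real_of_ereal trial)"

text \<open>tau_{k-1}: the value tau_{-1} for k = 0, otherwise tau (k-1).\<close>
definition prev_val :: "'a \<Rightarrow> (nat \<Rightarrow> 'a) \<Rightarrow> nat \<Rightarrow> 'a" where
  "prev_val a0 s k = (if k = 0 then a0 else s (k - 1))"

definition stop_test :: "real^'n \<Rightarrow> real^'m \<Rightarrow> real^'n^'m \<Rightarrow> real^'m \<Rightarrow> bool" where
  "stop_test g cx J y \<longleftrightarrow> g + transpose J *v y = 0 \<and> cx = 0"

definition common_iteration ::
  "(real^'n \<Rightarrow> real^'n) \<Rightarrow> (real^'n \<Rightarrow> real^'m) \<Rightarrow> (real^'n \<Rightarrow> real^'n^'m)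
   \<Rightarrow> real \<Rightarrow> real \<Rightarrow> real
   \<Rightarrow> (nat \<Rightarrow> real^'n) \<Rightarrow> (nat \<Rightarrow> real^'n) \<Rightarrow> (nat \<Rightarrow> real^'m) \<Rightarrow> (nat \<Rightarrow> real^'n^'n)
   \<Rightarrow> (nat \<Rightarrow> real) \<Rightarrow> (nat \<Rightarrow> real) \<Rightarrow> bool" where
  "common_iteration gf c Jc tau0 eps sig x d y H tau alpha \<longleftrightarrow>
     (\<forall>k. H k *v d k + transpose (Jc (x k)) *v y k = - gf (x k)
        \<and> Jc (x k) *v d k = - c (x k)
        \<and> tau k = tau_update eps (prev_val tau0 tau k)
                    (tau_trial sig (gf (x k)) (c (x k)) (H k) (d k))
        \<and> x (Suc k) = x k + alpha k *\<^sub>R d k)"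

definition alpha_A1 :: "real \<Rightarrow> real \<Rightarrow> real \<Rightarrow> real \<Rightarrow> real \<Rightarrow> real" where
  "alpha_A1 eta Lam dqk dn2 cn =
     (let ahat = 2 * (1 - eta) * dqk / (Lam * dn2);
          atil = ahat - 4 * cn / (Lam * dn2)
      in if ahat < 1 then ahat else if atil \<le> 1 then 1 else atil)"

definition LF_cond :: "(real^'n \<Rightarrow> real) \<Rightarrow> real^'n \<Rightarrow> real^'n \<Rightarrow> real^'n \<Rightarrow> real \<Rightarrow> real \<Rightarrow> bool" where
  "LF_cond f x g d a L \<longleftrightarrow>
     f (x + a *\<^sub>R d) \<le> f x + a * (g \<bullet> d) + (1/2) * L * a\<^sup>2 * (norm d)\<^sup>2"

definition LC_cond :: "(real^'n \<Rightarrow> real^'m) \<Rightarrow> (real^'n \<Rightarrow> real^'n^'m) \<Rightarrow> 'm \<Rightarrow> real^'n \<Rightarrow> real^'n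
    \<Rightarrow> real \<Rightarrow> real \<Rightarrow> bool" where
  "LC_cond c Jc i x d a gam \<longleftrightarrow>
     \<bar>c (x + a *\<^sub>R d) $ i\<bar> \<le> \<bar>c x $ i + a * ((Jc x $ i) \<bullet> d)\<bar> + (1/2) * gam * a\<^sup>2 * (norm d)\<^sup>2"

text \<open>LL k j = L_{k,j}, GG k j i = gamma_{k,i,j}, jacc k = index j of the accepted trial in
  iteration k (so L_k = LL k (jacc k), gamma_{k,i} = GG k (jacc k) i).\<close>
definition A1_trial :: "(real^'n \<Rightarrow> real) \<Rightarrow> (real^'n \<Rightarrow> real^'n) \<Rightarrow> (real^'n \<Rightarrow> real^'m) \<Rightarrow> real
   \<Rightarrow> (nat \<Rightarrow> real^'n) \<Rightarrow> (nat \<Rightarrow> real^'n) \<Rightarrow> (nat \<Rightarrow> real^'n^'n) \<Rightarrow> (nat \<Rightarrow> real)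
   \<Rightarrow> (nat \<Rightarrow> nat \<Rightarrow> real) \<Rightarrow> (nat \<Rightarrow> nat \<Rightarrow> 'm \<Rightarrow> real) \<Rightarrow> nat \<Rightarrow> nat \<Rightarrow> real" where
  "A1_trial f gf c eta x d H tau LL GG k j =
     alpha_A1 eta (tau k * LL k j + (\<Sum>i\<in>UNIV. GG k j i))
       (dq c (x k) (tau k) (gf (x k)) (H k) (d k)) ((norm (d k))\<^sup>2) (l1norm (c (x k)))"

definition algorithm1 ::
  "(real^'n \<Rightarrow> real) \<Rightarrow> (real^'n \<Rightarrow> real^'n) \<Rightarrow> (real^'n \<Rightarrow> real^'m) \<Rightarrow> (real^'n \<Rightarrow> real^'n^'m)
   \<Rightarrow> (real^'n) set
   \<Rightarrow> real \<Rightarrow> real \<Rightarrow> real \<Rightarrow> real \<Rightarrow> real \<Rightarrow> real \<Rightarrow> ('m \<Rightarrow> real)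
   \<Rightarrow> (nat \<Rightarrow> real^'n) \<Rightarrow> (nat \<Rightarrow> real^'n) \<Rightarrow> (nat \<Rightarrow> real^'m) \<Rightarrow> (nat \<Rightarrow> real^'n^'n)
   \<Rightarrow> (nat \<Rightarrow> real) \<Rightarrow> (nat \<Rightarrow> real)
   \<Rightarrow> (nat \<Rightarrow> nat \<Rightarrow> real) \<Rightarrow> (nat \<Rightarrow> nat \<Rightarrow> 'm \<Rightarrow> real) \<Rightarrow> (nat \<Rightarrow> nat) \<Rightarrow> bool" where
  "algorithm1 f gf c Jc X tau0 eps sig eta rho L0 gam0 x d y H tau alpha LL GG jacc \<longleftrightarrow>
     0 < tau0 \<and> 0 < eps \<and> eps < 1 \<and> 0 < sig \<and> sig < 1 \<and> 0 < eta \<and> eta < 1 \<and> 1 < rho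
     \<and> 0 < L0 \<and> (\<forall>i. 0 < gam0 i)
     \<and> common_iteration gf c Jc tau0 eps sig x d y H tau alpha
     \<and> (\<forall>k. 0 < LL k 0 \<and> LL k 0 \<le> prev_val L0 (\<lambda>k'. LL k' (jacc k')) k
          \<and> (\<forall>i. 0 < GG k 0 i \<and> GG k 0 i \<le> prev_val gam0 (\<lambda>k'. GG k' (jacc k')) k i)
          \<and> (\<forall>j. let a = A1_trial f gf c eta x d H tau LL GG k j;
                     xk = x k; gk = gf (x k);
                     acc = (SD f c eta xk (tau k) gk (H k) (d k) a
                            \<or> (LF_cond f xk gk (d k) a (LL k j)
                               \<and> (\<forall>i. LC_cond c Jc i xk (d k) a (GG k j i))))
                 in (j < jacc k \<longrightarrow>
                        \<not> acc
                        \<and> LL k (Suc j) = (if LF_cond f xk gk (d k) a (LL k j)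
                                           then LL k j else rho * LL k j)
                        \<and> (\<forall>i. GG k (Suc j) i = (if LC_cond c Jc i xk (d k) a (GG k j i)
                                                 then GG k j i else rho * GG k j i)))
                  \<and> (j = jacc k \<longrightarrow> acc \<and> alpha k = a)
                  \<and> (j \<le> jacc k \<longrightarrow> xk + a *\<^sub>R d k \<in> X)))"

definition algorithm2 ::
  "(real^'n \<Rightarrow> real) \<Rightarrow> (real^'n \<Rightarrow> real^'n) \<Rightarrow> (real^'n \<Rightarrow> real^'m) \<Rightarrow> (real^'n \<Rightarrow> real^'n^'m)
   \<Rightarrow> (real^'n) set
   \<Rightarrow> real \<Rightarrow> real \<Rightarrow> real \<Rightarrow> real \<Rightarrow> real \<Rightarrow> real
   \<Rightarrow> (nat \<Rightarrow> real^'n) \<Rightarrow> (nat \<Rightarrow> real^'n) \<Rightarrow> (nat \<Rightarrow> real^'m) \<Rightarrow> (nat \<Rightarrow> real^'n^'n)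
   \<Rightarrow> (nat \<Rightarrow> real) \<Rightarrow> (nat \<Rightarrow> real) \<Rightarrow> bool" where
  "algorithm2 f gf c Jc X tau0 eps sig eta nu abar x d y H tau alpha \<longleftrightarrow>
     0 < tau0 \<and> 0 < eps \<and> eps < 1 \<and> 0 < sig \<and> sig < 1 \<and> 0 < eta \<and> eta < 1
     \<and> 0 < nu \<and> nu < 1 \<and> 0 < abar
     \<and> common_iteration gf c Jc tau0 eps sig x d y H tau alpha
     \<and> (\<forall>k. \<exists>j. alpha k = nu ^ j * abar
          \<and> SD f c eta (x k) (tau k) (gf (x k)) (H k) (d k) (nu ^ j * abar)
          \<and> (\<forall>i<j. \<not> SD f c eta (x k) (tau k) (gf (x k)) (H k) (d k) (nu ^ i * abar))
          \<and> (\<forall>i\<le>j. x k + (nu ^ i * abar) *\<^sub>R d k \<in> X))"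

definition standing_assumption ::
  "(real^'n \<Rightarrow> real) \<Rightarrow> (real^'n \<Rightarrow> real^'n) \<Rightarrow> (real^'n \<Rightarrow> real^'m) \<Rightarrow> (real^'n \<Rightarrow> real^'n^'m)
   \<Rightarrow> (real^'n) set \<Rightarrow> (nat \<Rightarrow> real^'n) \<Rightarrow> bool" where
  "standing_assumption f gf c Jc X x \<longleftrightarrow>
     open X \<and> convex X \<and> (\<forall>k. x k \<in> X)
     \<and> (\<forall>z\<in>X. (f has_derivative (\<lambda>h. gf z \<bullet> h)) (at z)) \<and> continuous_on X gf
     \<and> (\<exists>B. \<forall>z\<in>X. B \<le> f z)
     \<and> bounded (gf ` X) \<and> (\<exists>L. lipschitz_on L X gf)
     \<and> (\<forall>z\<in>X. (c has_derivative (\<lambda>h. Jc z *v h)) (at z))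
     \<and> bounded (c ` X) \<and> bounded (Jc ` X)
     \<and> (\<forall>i. \<exists>gam. lipschitz_on gam X (\<lambda>z. Jc z $ i))
     \<and> (\<exists>s>0. \<forall>z\<in>X. \<forall>sv\<in>singular_values (transpose (Jc z)). s \<le> sv)"

definition matrix_assumption ::
  "(real^'n \<Rightarrow> real^'n^'m) \<Rightarrow> (nat \<Rightarrow> real^'n) \<Rightarrow> (nat \<Rightarrow> real^'n^'n) \<Rightarrow> bool" where
  "matrix_assumption Jc x H \<longleftrightarrow>
     (\<exists>kappa zeta. 0 < zeta \<and>
        (\<forall>k. transpose (H k) = H k
           \<and> onorm (\<lambda>v. H k *v v) \<le> kappa
           \<and> (\<forall>u. Jc (x k) *v u = 0 \<longrightarrow> zeta * (norm u)\<^sup>2 \<le> u \<bullet> (H k *v u))))"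

end

theory Submission imports Defs begin

lemma inner_transpose_mv:
  fixes A :: "real^'n^'m" and x :: "real^'n" and y :: "real^'m"
  shows "x \<bullet> (transpose A *v y) = (A *v x) \<bullet> y"
  by (metis dot_lmul_matrix inner_commute transpose_transpose vector_transpose_matrix)

lemma psd_zero:
  fixes P :: "'a::real_inner \<Rightarrow> 'a"
  assumes lin: "linear P" and sym: "\<And>a b. a \<bullet> P b = P a \<bullet> b"
    and psd: "\<And>a. 0 \<le> a \<bullet> P a" and z: "w \<bullet> P w = 0"
  shows "P w = 0"
proof -
  define r where "r = P w"
  define R where "R = r \<bullet> r"
  define K where "K = r \<bullet> P r"
  have K0: "0 \<le> K" using psd K_def by auto
  have "\<And>t. (w + t *\<^sub>R r) \<bullet> P (w + t *\<^sub>R r) = 2 * t * R + t^2 * K"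
  proof -
    fix t
    have "(w + t *\<^sub>R r) \<bullet> P (w + t *\<^sub>R r) = w \<bullet> P w + t * (w \<bullet> P r) + t * (r \<bullet> P w) + t*t*(r \<bullet> P r)"
      by (simp add: linear_add[OF lin] linear_scale[OF lin] inner_add_left inner_add_right algebra_simps)
    also have "w \<bullet> P r = r \<bullet> P w" using sym[of w r] by (simp add: inner_commute)
    finally show "(w + t *\<^sub>R r) \<bullet> P (w + t *\<^sub>R r) = 2 * t * R + t^2 * K"
      using z by (simp add: R_def K_def r_def power2_eq_square)
  qed
  from this[of "- R / (K+1)"] psd[of "w + (- R / (K+1)) *\<^sub>R r"]
  have h: "0 \<le> 2 * (- R / (K+1)) * R + (- R / (K+1))^2 * K" by simp
  have "0 \<le> (2 * (- R / (K+1)) * R + (- R / (K+1))^2 * K) * (K+1)^2"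
    using h K0 by simp
  also have "\<dots> = - R * R * (K + 2)"
  proof -
    define t where "t = - R / (K+1)"
    have tk: "t * (K+1) = - R" using K0 by (simp add: t_def)
    have "(2 * t * R + t^2 * K) * (K+1)^2 = 2 * (t*(K+1)) * R * (K+1) + (t*(K+1))^2 * K"
      by (simp add: power2_eq_square algebra_simps)
    also have "\<dots> = - R * R * (K + 2)" unfolding tk by (simp add: power2_eq_square algebra_simps)
    finally show ?thesis unfolding t_def .
  qed
  finally have "0 \<le> - (R * R) * (K + 2)" by simp
  hence "R * R \<le> 0" using K0 by (simp add: mult_le_0_iff)
  hence "R = 0" by (metis mult_le_0_iff order_antisym_conv zero_le_square)
  thus ?thesis by (simp add: R_def r_def)
qed

lemma eig_lower:
  fixes M :: "real^'m^'m"
  assumes sym: "transpose M = M" and psd: "\<And>w. 0 \<le> w \<bullet> (M *v w)" and s0: "0 < s"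
    and ev: "\<And>l v. v \<noteq> 0 \<Longrightarrow> M *v v = l *\<^sub>R v \<Longrightarrow> s \<le> sqrt l"
  shows "s^2 * (norm w)^2 \<le> w \<bullet> (M *v w)"
proof -
  have "\<exists>x\<in>sphere (0::real^'m) 1. \<forall>y\<in>sphere 0 1. x \<bullet> (M *v x) \<le> y \<bullet> (M *v y)"
    by (rule continuous_attains_inf) (auto simp: sphere_eq_empty intro!: continuous_intros)
  then obtain w0 where w0: "norm w0 = 1" and mn: "\<And>y. norm y = 1 \<Longrightarrow> w0 \<bullet> (M *v w0) \<le> y \<bullet> (M *v y)"
    by auto
  define mu where "mu = w0 \<bullet> (M *v w0)"
  have mu0: "0 \<le> mu" using psd mu_def by auto
  have lowb: "mu * (norm z)^2 \<le> z \<bullet> (M *v z)" for z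
  proof (cases "z = 0")
    case True then show ?thesis by simp
  next
    case False
    hence nz: "norm z > 0" by simp
    have "mu \<le> ((1/norm z) *\<^sub>R z) \<bullet> (M *v ((1/norm z) *\<^sub>R z))"
      unfolding mu_def using False by (intro mn) simp
    also have "\<dots> = (z \<bullet> (M *v z)) / (norm z)^2"
      by (simp add: matrix_vector_mult_scaleR power2_eq_square)
    finally show ?thesis using nz by (simp add: field_simps)
  qed
  define P where "P = (\<lambda>z. M *v z - mu *\<^sub>R z)"
  have lin: "linear P" unfolding linear_iff P_def
    by (simp add: matrix_vector_right_distrib matrix_vector_mult_scaleR algebra_simps)
  have symP: "a \<bullet> P b = P a \<bullet> b" for a b
  proof -
    have "a \<bullet> (M *v b) = (M *v a) \<bullet> b"
      using inner_transpose_mv[of a M b] sym by simp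
    thus ?thesis by (simp add: P_def inner_diff_left inner_diff_right inner_commute)
  qed
  have psdP: "0 \<le> a \<bullet> P a" for a
    using lowb[of a] by (simp add: P_def inner_diff_right power2_norm_eq_inner)
  have "w0 \<bullet> P w0 = 0" using w0 by (simp add: P_def inner_diff_right mu_def power2_norm_eq_inner[symmetric])
  hence "P w0 = 0" by (rule psd_zero[OF lin symP psdP])
  hence "M *v w0 = mu *\<^sub>R w0" by (simp add: P_def)
  moreover have "w0 \<noteq> 0" using w0 by auto
  ultimately have "s \<le> sqrt mu" using ev by blast
  hence "s^2 \<le> (sqrt mu)^2" using s0 by (intro power_mono) auto
  hence "s^2 \<le> mu" using mu0 by simp
  hence "s^2 * (norm w)^2 \<le> mu * (norm w)^2" by (simp add: mult_right_mono)
  thus ?thesis using lowb[of w] by linarith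
qed

theorem lemma2p15:
  fixes f :: "real^'n::finite \<Rightarrow> real" and gf :: "real^'n \<Rightarrow> real^'n"
    and c :: "real^'n \<Rightarrow> real^'m::finite" and Jc :: "real^'n \<Rightarrow> real^'n^'m"
    and X :: "(real^'n) set"
    and x d :: "nat \<Rightarrow> real^'n" and y :: "nat \<Rightarrow> real^'m" and H :: "nat \<Rightarrow> real^'n^'n"
    and tau alpha :: "nat \<Rightarrow> real"
    and u v :: "nat \<Rightarrow> real^'n"
  assumes SA: "standing_assumption f gf c Jc X x"
    and MA: "matrix_assumption Jc x H"
    and ALG: "(\<exists>tau0 eps sig eta rho L0 gam0 LL GG jacc.
                 algorithm1 f gf c Jc X tau0 eps sig eta rho L0 gam0 x d y H tau alpha LL GG jacc)
            \<or> (\<exists>tau0 eps sig eta nu abar.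
                 algorithm2 f gf c Jc X tau0 eps sig eta nu abar x d y H tau alpha)"
    and no_stop: "\<forall>k. \<not> stop_test (gf (x k)) (c (x k)) (Jc (x k)) (y k)"
    and decomp: "\<forall>k. d k = u k + v k \<and> Jc (x k) *v u k = 0
                   \<and> v k \<in> range (\<lambda>w. transpose (Jc (x k)) *v w)"
  shows "bounded (range u)"
  proof -
  obtain sv where sv0: "0 < sv" and svb: "\<And>z w. z \<in> X \<Longrightarrow> w \<in> singular_values (transpose (Jc z)) \<Longrightarrow> sv \<le> w"
    using SA unfolding standing_assumption_def by blast
  have xX: "\<And>k. x k \<in> X" using SA unfolding standing_assumption_def by blast
  obtain Bc where Bc: "\<And>z. z \<in> X \<Longrightarrow> norm (c z) \<le> Bc"
    using SA unfolding standing_assumption_def bounded_iff by blast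
  obtain Bg where Bg: "\<And>z. z \<in> X \<Longrightarrow> norm (gf z) \<le> Bg"
    using SA unfolding standing_assumption_def bounded_iff by blast
  obtain kappa zeta where z0: "0 < zeta" and Hn: "\<And>k. onorm (\<lambda>v. H k *v v) \<le> kappa"
    and Hpd: "\<And>k u. Jc (x k) *v u = 0 \<Longrightarrow> zeta * (norm u)\<^sup>2 \<le> u \<bullet> (H k *v u)"
    using MA unfolding matrix_assumption_def by blast
  have CI: "\<exists>tau0 eps sig. common_iteration gf c Jc tau0 eps sig x d y H tau alpha"
    using ALG unfolding algorithm1_def algorithm2_def by blast
  then obtain tau0 eps sig where CI: "common_iteration gf c Jc tau0 eps sig x d y H tau alpha" by blast
  have eq1: "\<And>k. H k *v d k + transpose (Jc (x k)) *v y k = - gf (x k)"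
    and eq2: "\<And>k. Jc (x k) *v d k = - c (x k)"
    using CI unfolding common_iteration_def by blast+
  have vb: "norm (v k) \<le> Bc / sv" for k
  proof -
    define J where "J = Jc (x k)"
    obtain w where vw: "v k = transpose J *v w" using decomp J_def by blast
    define M where "M = J ** transpose J"
    have qv: "z \<bullet> (M *v z) = (transpose J *v z) \<bullet> (transpose J *v z)" for z
      using inner_transpose_mv[of z "transpose J" "transpose J *v z"]
      by (simp add: M_def matrix_vector_mul_assoc[symmetric])
    have symM: "transpose M = M" by (simp add: M_def matrix_transpose_mul)
    have psdM: "0 \<le> z \<bullet> (M *v z)" for z using qv by simp
    have evM: "sv \<le> sqrt l" if "q \<noteq> 0" "M *v q = l *\<^sub>R q" for l q
      using svb[OF xX[of k], of "sqrt l"] that unfolding singular_values_def M_def J_def by auto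
    have low: "sv^2 * (norm w)^2 \<le> w \<bullet> (M *v w)" by (rule eig_lower[OF symM psdM sv0 evM])
    have nv: "(norm (v k))^2 = w \<bullet> (M *v w)" using qv[of w] vw by (simp add: power2_norm_eq_inner)
    have Ju: "J *v u k = 0" using decomp J_def by blast
    have "J *v v k = - c (x k)" using eq2[of k] decomp Ju
      by (metis J_def add_0 matrix_vector_right_distrib)
    hence Mw: "M *v w = - c (x k)" unfolding M_def vw matrix_vector_mul_assoc[symmetric] .
    have "(norm (v k))^2 \<le> norm w * norm (c (x k))" using nv Mw Cauchy_Schwarz_ineq2[of w "M *v w"] by simp
    also have "\<dots> \<le> norm w * Bc" using Bc[OF xX[of k]] by (simp add: mult_left_mono)
    finally have A: "(norm (v k))^2 \<le> norm w * Bc" .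
    have "(sv * norm w)^2 \<le> (norm (v k))^2" using low nv by (simp add: power_mult_distrib)
    hence B: "sv * norm w \<le> norm (v k)" using sv0 by (simp add: power2_le_iff_abs_le)
    have Bc0: "0 \<le> Bc" using Bc[OF xX[of k]] norm_ge_zero order_trans by blast
    have "sv * (norm (v k))^2 \<le> (sv * norm w) * Bc" using A sv0 by (simp add: mult_left_mono mult.assoc)
    also have "\<dots> \<le> norm (v k) * Bc" using B Bc0 by (simp add: mult_right_mono)
    finally have "sv * (norm (v k))^2 \<le> norm (v k) * Bc" .
    hence "sv * norm (v k) \<le> Bc"
      by (cases "v k = 0") (auto simp: power2_eq_square Bc0)
    thus ?thesis using sv0 by (simp add: field_simps)
  qed
  have ub: "norm (u k) \<le> (Bg + kappa * (Bc / sv)) / zeta" for k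
  proof -
    define J where "J = Jc (x k)"
    have Ju: "J *v u k = 0" using decomp J_def by blast
    have dk: "d k = u k + v k" using decomp by blast
    have kap0: "0 \<le> kappa" using Hn[of k] onorm_pos_le[OF matrix_vector_mul_bounded_linear[of "H k"]]
      by linarith
    have Hv: "norm (H k *v v k) \<le> kappa * norm (v k)"
      using onorm[OF matrix_vector_mul_bounded_linear[of "H k"], of "v k"] Hn[of k]
      by (meson mult_right_mono norm_ge_zero order_trans)
    have "u k \<bullet> (transpose J *v y k) = 0" using inner_transpose_mv[of "u k" J "y k"] Ju by simp
    hence "u k \<bullet> (H k *v d k) = - (u k \<bullet> gf (x k))"
      using arg_cong[OF eq1[of k], of "\<lambda>z. u k \<bullet> z"] J_def by (simp add: inner_add_right)
    hence e: "u k \<bullet> (H k *v u k) = - (u k \<bullet> gf (x k)) - u k \<bullet> (H k *v v k)"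
      by (simp add: dk matrix_vector_right_distrib inner_add_right)
    have "zeta * (norm (u k))^2 \<le> u k \<bullet> (H k *v u k)" using Hpd Ju J_def by blast
    also have "\<dots> \<le> norm (u k) * Bg + norm (u k) * (kappa * (Bc / sv))"
    proof -
      have "- (u k \<bullet> gf (x k)) \<le> norm (u k) * norm (gf (x k))"
        using Cauchy_Schwarz_ineq2[of "u k" "gf (x k)"] by linarith
      also have "\<dots> \<le> norm (u k) * Bg" using Bg[OF xX[of k]] by (simp add: mult_left_mono)
      finally have a: "- (u k \<bullet> gf (x k)) \<le> norm (u k) * Bg" .
      have "- (u k \<bullet> (H k *v v k)) \<le> norm (u k) * norm (H k *v v k)"
        using Cauchy_Schwarz_ineq2[of "u k" "H k *v v k"] by linarith
      also have "\<dots> \<le> norm (u k) * (kappa * norm (v k))" using Hv by (simp add: mult_left_mono)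
      also have "\<dots> \<le> norm (u k) * (kappa * (Bc / sv))" using vb[of k] kap0
        by (intro mult_left_mono) auto
      finally show ?thesis using a e by linarith
    qed
    finally have "zeta * (norm (u k))^2 \<le> norm (u k) * (Bg + kappa * (Bc / sv))"
      by (simp add: algebra_simps)
    hence "zeta * norm (u k) * norm (u k) \<le> (Bg + kappa * (Bc / sv)) * norm (u k)"
      by (simp add: power2_eq_square algebra_simps)
    hence "zeta * norm (u k) \<le> Bg + kappa * (Bc / sv) \<or> norm (u k) = 0"
      by (metis mult_right_le_imp_le norm_ge_zero order_le_less)
    moreover have "0 \<le> Bg" using Bg[OF xX[of k]] norm_ge_zero order_trans by blast
    moreover have "0 \<le> Bc" using Bc[OF xX[of k]] norm_ge_zero order_trans by blast
    ultimately have "zeta * norm (u k) \<le> Bg + kappa * (Bc / sv)"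
      using kap0 sv0 by auto
    thus ?thesis using z0 by (simp add: field_simps)
  qed
  show ?thesis unfolding bounded_iff using ub by blast
qed

end
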